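(* Let $a>0$, $\alpha\in[0,1)$ and $f\in\mathcal C_a$. Then the function $\mathrm{Sh}_\alpha(f)$ is convex.
   Context: $\mathcal C_a$ is the set of $C^1$ functions $f:\mathbb R\to\mathbb R$ that are even, satisfy $f(s)=|s|$ for $|s|\ge a$ and are strictly convex on $[-a,a]$. For $f\in\mathcal C_a$: $F_\alpha(s)=f(s)-\alpha s$, $x_\alpha^+=(f')^{-1}(\alpha)\in[0,a)$ (inverse of $f':[-a,a]\to[-1,1]$); $F_\alpha$ decreases on $(-\infty,x_\alpha^+]$ and increases on $[x_\alpha^+,\infty)$. Let $F_\alpha^{-1}$ be the inverse of $F_\alpha|_{[x_\alpha^+,\infty)}$, $\phi=F_\alpha^{-1}\circ F_\alpha$, $\delta_x=(1-\alpha)^{-1}F_\alpha(x)-\phi(x)$, $s_\alpha=x_\alpha^++\delta_{x_\alpha^+}$; $x\mapsto x+\delta_x$ is an increasing bijection $(-\infty,x_\alpha^+]\to(-\infty,s_\alpha]$ with inverse $\tau$. Define $\mathrm{Sh}_\alpha(f)(x)=\alpha x+F_\alpha(\tau(x))$ for $x\le s_\alpha$ and $=x$ for $x>s_\alpha$. *)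

theory Defs
  imports "HOL-Analysis.Analysis"
begin

definition strictly_convex_on :: "real set \<Rightarrow> (real \<Rightarrow> real) \<Rightarrow> bool" where
  "strictly_convex_on S f \<longleftrightarrow>
     (\<forall>x\<in>S. \<forall>y\<in>S. x \<noteq> y \<longrightarrow> (\<forall>t. 0 < t \<and> t < 1 \<longrightarrow>
        f ((1 - t) * x + t * y) < (1 - t) * f x + t * f y))"

definition classC :: "real \<Rightarrow> (real \<Rightarrow> real) set" where
  "classC a = {f. f C1_differentiable_on UNIV \<and> (\<forall>s. f (- s) = f s)
      \<and> (\<forall>s. a \<le> \<bar>s\<bar> \<longrightarrow> f s = \<bar>s\<bar>) \<and> strictly_convex_on {-a..a} f}"

definition Falpha :: "real \<Rightarrow> (real \<Rightarrow> real) \<Rightarrow> real \<Rightarrow> real" where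
  "Falpha \<alpha> f s = f s - \<alpha> * s"

definition xplus :: "real \<Rightarrow> real \<Rightarrow> (real \<Rightarrow> real) \<Rightarrow> real" where
  "xplus a \<alpha> f = (THE x. x \<in> {-a..a} \<and> deriv f x = \<alpha>)"

definition phi :: "real \<Rightarrow> real \<Rightarrow> (real \<Rightarrow> real) \<Rightarrow> real \<Rightarrow> real" where
  "phi a \<alpha> f x = the_inv_into {xplus a \<alpha> f..} (Falpha \<alpha> f) (Falpha \<alpha> f x)"

definition delta :: "real \<Rightarrow> real \<Rightarrow> (real \<Rightarrow> real) \<Rightarrow> real \<Rightarrow> real" where
  "delta a \<alpha> f x = Falpha \<alpha> f x / (1 - \<alpha>) - phi a \<alpha> f x"

definition salpha :: "real \<Rightarrow> real \<Rightarrow> (real \<Rightarrow> real) \<Rightarrow> real" where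
  "salpha a \<alpha> f = xplus a \<alpha> f + delta a \<alpha> f (xplus a \<alpha> f)"

definition tau :: "real \<Rightarrow> real \<Rightarrow> (real \<Rightarrow> real) \<Rightarrow> real \<Rightarrow> real" where
  "tau a \<alpha> f = the_inv_into {..xplus a \<alpha> f} (\<lambda>x. x + delta a \<alpha> f x)"

definition Sh :: "real \<Rightarrow> real \<Rightarrow> (real \<Rightarrow> real) \<Rightarrow> real \<Rightarrow> real" where
  "Sh a \<alpha> f x = (if x \<le> salpha a \<alpha> f then \<alpha> * x + Falpha \<alpha> f (tau a \<alpha> f x) else x)"

end

theory Submission
  imports Defs
begin

lemma glue_convex:
  fixes G :: "real \<Rightarrow> real"
  assumes L: "convex_on {..s} G" and R: "convex_on {s..} G" and m: "\<And>x. G s \<le> G x"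
  shows "convex_on UNIV G"
proof (rule convex_on_linorderI)
  show "convex (UNIV::real set)" by simp
  fix t x y :: real
  assume t: "0 < t" "t < 1" and xy: "x < y"
  define z where "z = (1 - t) * x + t * y"
  have e1: "z - x = t * (y - x)" "y - z = (1 - t) * (y - x)" by (simp_all add: z_def algebra_simps)
  have p1: "t * (y - x) > 0" using t xy by simp
  have p2: "(1 - t) * (y - x) > 0" using t xy by simp
  have zx1: "x < z" using e1(1) p1 by linarith
  have zx2: "z < y" using e1(2) p2 by linarith
  note zx = zx1 zx2
  have tdef: "t = (z - x) / (y - x)" using xy unfolding z_def by (simp add: field_simps)
  have goal: "G z \<le> (1 - t) * G x + t * G y"
  proof (cases "y \<le> s")
    case True
    then show ?thesis using convex_onD[OF L, of t x y] t xy by (simp add: z_def)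
  next
    case ys: False
    show ?thesis
    proof (cases "s \<le> x")
      case True
      then show ?thesis using convex_onD[OF R, of t x y] t xy ys by (simp add: z_def)
    next
      case xs: False
      show ?thesis
      proof (cases "z \<le> s")
        case True
        define \<mu> where "\<mu> = (z - x) / (s - x)"
        have mu: "0 \<le> \<mu>" "\<mu> \<le> 1" using True zx xs unfolding \<mu>_def by auto
        have h1: "\<mu> * (s - x) = z - x" using xs unfolding \<mu>_def by simp
        have h2: "(1 - \<mu>) * x + \<mu> * s = x + \<mu> * (s - x)" by (simp add: algebra_simps)
        have zz: "z = (1 - \<mu>) * x + \<mu> * s" using h1 h2 by linarith
        have c1: "G z \<le> (1 - \<mu>) * G x + \<mu> * G s"
          using convex_onD[OF L, of \<mu> x s] mu xs zz by simp
        have tm: "t \<le> \<mu>" unfolding tdef \<mu>_def using zx xs ys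
          by (intro divide_left_mono) auto
        have "(1 - \<mu>) * G x + \<mu> * G s \<le> (1 - t) * G x + t * G s"
        proof -
          have "(\<mu> - t) * (G x - G s) \<ge> 0" using tm m[of x] by simp
          moreover have "(1 - t) * G x + t * G s - ((1 - \<mu>) * G x + \<mu> * G s) = (\<mu> - t) * (G x - G s)"
            by (simp add: algebra_simps)
          ultimately show ?thesis by linarith
        qed
        also have "\<dots> \<le> (1 - t) * G x + t * G y" using m[of y] t by (simp add: mult_left_mono)
        finally show ?thesis using c1 by simp
      next
        case False
        define \<mu> where "\<mu> = (z - s) / (y - s)"
        have mu: "0 \<le> \<mu>" "\<mu> \<le> 1" using False zx ys unfolding \<mu>_def by auto
        have h1: "\<mu> * (y - s) = z - s" using ys unfolding \<mu>_def by simp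
        have h2: "(1 - \<mu>) * s + \<mu> * y = s + \<mu> * (y - s)" by (simp add: algebra_simps)
        have zz: "z = (1 - \<mu>) * s + \<mu> * y" using h1 h2 by linarith
        have c1: "G z \<le> (1 - \<mu>) * G s + \<mu> * G y"
          using convex_onD[OF R, of \<mu> s y] mu ys zz by simp
        have t2: "1 - t = (y - z) / (y - x)" using xy unfolding z_def by (simp add: field_simps)
        have m2: "1 - \<mu> = (y - z) / (y - s)" using ys unfolding \<mu>_def by (simp add: field_simps)
        have tm: "1 - t \<le> 1 - \<mu>" unfolding t2 m2 using zx xs ys
          by (intro divide_left_mono) auto
        have "(1 - \<mu>) * G s + \<mu> * G y \<le> (1 - t) * G s + t * G y"
        proof -
          have "(t - \<mu>) * (G y - G s) \<ge> 0" using tm m[of y] by simp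
          moreover have "(1 - t) * G s + t * G y - ((1 - \<mu>) * G s + \<mu> * G y) = (t - \<mu>) * (G y - G s)"
            by (simp add: algebra_simps)
          ultimately show ?thesis by linarith
        qed
        also have "\<dots> \<le> (1 - t) * G x + t * G y" using m[of x] t by (simp add: mult_left_mono)
        finally show ?thesis using c1 by simp
      qed
    qed
  qed
  then show "G ((1 - t) *\<^sub>R x + t *\<^sub>R y) \<le> (1 - t) * G x + t * G y" by (simp add: z_def)
qed


lemma secant_left:
  fixes f :: "real \<Rightarrow> real"
  assumes cv: "convex_on S f" and cy: "c < y" and sub: "{c..y} \<subseteq> S"
    and d: "(f has_real_derivative d) (at c)"
  shows "d \<le> (f y - f c) / (y - c)"
proof -
  have "(f has_real_derivative d) (at c within {c<..})"
    using d by (rule has_field_derivative_at_within)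
  then have lim: "((\<lambda>z. (f z - f c) / (z - c)) \<longlongrightarrow> d) (at_right c)"
    by (simp add: has_field_derivative_iff)
  have ev: "eventually (\<lambda>z. (f z - f c) / (z - c) \<le> (f y - f c) / (y - c)) (at_right c)"
  proof (rule eventually_at_rightI[of c y])
    fix z assume z: "z \<in> {c<..<y}"
    define t where "t = (z - c) / (y - c)"
    have t: "0 \<le> t" "t \<le> 1" using z cy unfolding t_def by auto
    have h1: "t * (y - c) = z - c" using cy unfolding t_def by simp
    have h2: "(1 - t) * c + t * y = c + t * (y - c)" by (simp add: algebra_simps)
    have zz: "z = (1 - t) * c + t * y" using h1 h2 by linarith
    have "f z \<le> (1 - t) * f c + t * f y"
    proof -
      have "c \<in> S" "y \<in> S" using sub cy by auto
      then show ?thesis using convex_onD[OF cv, of t c y] t zz by simp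
    qed
    then have "f z - f c \<le> t * (f y - f c)" by (simp add: algebra_simps)
    then have "(f z - f c) / (z - c) \<le> t * (f y - f c) / (z - c)"
      using z by (simp add: divide_right_mono)
    also have "\<dots> = t * (f y - f c) / (t * (y - c))" using h1 by simp
    also have "\<dots> = (f y - f c) / (y - c)" using z cy unfolding t_def by simp
    finally show "(f z - f c) / (z - c) \<le> (f y - f c) / (y - c)" .
  qed (use cy in auto)
  show ?thesis by (rule tendsto_upperbound[OF lim ev]) simp
qed

lemma secant_right:
  fixes f :: "real \<Rightarrow> real"
  assumes cv: "convex_on S f" and cy: "c < y" and sub: "{c..y} \<subseteq> S"
    and d: "(f has_real_derivative e) (at y)"
  shows "(f y - f c) / (y - c) \<le> e"
proof -
  have "(f has_real_derivative e) (at y within {..<y})"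
    using d by (rule has_field_derivative_at_within)
  then have lim: "((\<lambda>z. (f z - f y) / (z - y)) \<longlongrightarrow> e) (at_left y)"
    by (simp add: has_field_derivative_iff)
  have ev: "eventually (\<lambda>z. (f y - f c) / (y - c) \<le> (f z - f y) / (z - y)) (at_left y)"
  proof (rule eventually_at_leftI[of c y])
    fix z assume z: "z \<in> {c<..<y}"
    define t where "t = (z - c) / (y - c)"
    have t: "0 \<le> t" "t \<le> 1" using z cy unfolding t_def by auto
    have h1: "t * (y - c) = z - c" using cy unfolding t_def by simp
    have h2: "(1 - t) * c + t * y = c + t * (y - c)" by (simp add: algebra_simps)
    have zz: "z = (1 - t) * c + t * y" using h1 h2 by linarith
    have "f z \<le> (1 - t) * f c + t * f y"
    proof -
      have "c \<in> S" "y \<in> S" using sub cy by auto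
      then show ?thesis using convex_onD[OF cv, of t c y] t zz by simp
    qed
    then have "(1 - t) * (f y - f c) \<le> f y - f z" by (simp add: algebra_simps)
    have yz: "y - z = (1 - t) * (y - c)" using cy unfolding t_def by (simp add: field_simps)
    have "t \<noteq> 1" using z cy h1 by auto
    then have "(f y - f c) / (y - c) = (1 - t) * (f y - f c) / ((1 - t) * (y - c))"
      by simp
    also have "\<dots> = (1 - t) * (f y - f c) / (y - z)" using yz by simp
    finally have "(f y - f c) / (y - c) = (1 - t) * (f y - f c) / (y - z)" .
    also have "\<dots> \<le> (f y - f z) / (y - z)"
      using z \<open>(1 - t) * (f y - f c) \<le> f y - f z\<close> by (simp add: divide_right_mono)
    also have "\<dots> = (- (f y - f z)) / (- (y - z))" by (rule minus_divide_divide[symmetric])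
    also have "\<dots> = (f z - f y) / (z - y)" by simp
    finally show "(f y - f c) / (y - c) \<le> (f z - f y) / (z - y)" .
  qed (use cy in auto)
  show ?thesis by (rule tendsto_lowerbound[OF lim ev]) simp
qed


locale shc =
  fixes a \<alpha> :: real and f D :: "real \<Rightarrow> real"
  assumes apos: "a > 0" and al0: "0 \<le> \<alpha>" and al1: "\<alpha> < 1"
    and Dder: "\<And>x. (f has_real_derivative D x) (at x)"
    and Dcont: "continuous_on UNIV D"
    and fout: "\<And>s. a \<le> \<bar>s\<bar> \<Longrightarrow> f s = \<bar>s\<bar>"
    and sc: "strictly_convex_on {-a..a} f"
begin

lemma D_gt: "x > a \<Longrightarrow> D x = 1"
proof -
  assume x: "x > a"
  have "((\<lambda>x. x) has_real_derivative D x) (at x)"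
    by (rule has_field_derivative_transform_within_open[OF Dder, of "{a<..}"]) (use x apos fout in auto)
  moreover have "((\<lambda>x. x) has_real_derivative 1) (at x)" by (rule DERIV_ident)
  ultimately show ?thesis by (rule DERIV_unique)
qed

lemma D_lt: "x < -a \<Longrightarrow> D x = -1"
proof -
  assume x: "x < -a"
  have "((\<lambda>x. - x) has_real_derivative D x) (at x)"
    by (rule has_field_derivative_transform_within_open[OF Dder, of "{..< -a}"]) (use x apos fout in auto)
  moreover have "((\<lambda>x. - x) has_real_derivative -1) (at x)" by (auto intro!: derivative_eq_intros)
  ultimately show ?thesis by (rule DERIV_unique)
qed

lemma D_isCont: "isCont D x"
  using Dcont by (simp add: continuous_on_eq_continuous_at)

lemma D_a: "D a = 1"
proof -
  have l1: "(D \<longlongrightarrow> D a) (at_right a)"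
    using D_isCont[of a] by (simp add: isCont_def filterlim_at_split)
  have "eventually (\<lambda>x. D x = 1) (at_right a)"
    unfolding eventually_at_right_field using D_gt by (intro exI[of _ "a+1"]) auto
  then have l2: "(D \<longlongrightarrow> 1) (at_right a)" by (rule tendsto_eventually)
  show ?thesis using tendsto_unique[OF _ l1 l2] by simp
qed

lemma D_ma: "D (-a) = -1"
proof -
  have l1: "(D \<longlongrightarrow> D (-a)) (at_left (-a))"
    using D_isCont[of "-a"] by (simp add: isCont_def filterlim_at_split)
  have "eventually (\<lambda>x. D x = -1) (at_left (-a))"
    unfolding eventually_at_left_field using D_lt by (intro exI[of _ "-a-1"]) auto
  then have l2: "(D \<longlongrightarrow> -1) (at_left (-a))" by (rule tendsto_eventually)
  show ?thesis using tendsto_unique[OF _ l1 l2] by simp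
qed

lemma cvx_a: "convex_on {-a..a} f"
proof (rule convex_on_linorderI)
  fix t x y :: real assume "0 < t" "t < 1" "x \<in> {-a..a}" "y \<in> {-a..a}" "x < y"
  then show "f ((1 - t) *\<^sub>R x + t *\<^sub>R y) \<le> (1 - t) * f x + t * f y"
    using sc unfolding strictly_convex_on_def by (auto intro: less_imp_le)
qed simp

lemma D_strict: "-a \<le> x \<Longrightarrow> x < y \<Longrightarrow> y \<le> a \<Longrightarrow> D x < D y"
proof -
  assume xy: "-a \<le> x" "x < y" "y \<le> a"
  define m where "m = (x + y) / 2"
  have m: "x < m" "m < y" using xy by (auto simp: m_def)
  have "D x \<le> (f m - f x) / (m - x)"
    by (rule secant_left[OF cvx_a m(1) _ Dder]) (use xy m in auto)
  also have "\<dots> < (f y - f m) / (y - m)"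
  proof -
    have "f ((1 - 1/2) * x + (1/2) * y) < (1 - 1/2) * f x + (1/2) * f y"
      by (rule sc[unfolded strictly_convex_on_def, rule_format]) (use xy in auto)
    then have "f m - f x < f y - f m" by (simp add: m_def field_simps)
    moreover have dd: "y - m = m - x" by (simp add: m_def field_simps)
    moreover have "m - x > 0" using m by simp
    ultimately have "(f m - f x) / (m - x) < (f y - f m) / (m - x)" by (simp add: divide_strict_right_mono)
    then show ?thesis using dd by simp
  qed
  also have "\<dots> \<le> D y"
    by (rule secant_right[OF cvx_a m(2) _ Dder]) (use xy m in auto)
  finally show ?thesis .
qed

lemma D_ge_a: "z \<ge> a \<Longrightarrow> D z = 1"
  using D_gt D_a by (cases "z = a") auto

lemma D_le_ma: "z \<le> -a \<Longrightarrow> D z = -1"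
  using D_lt D_ma by (cases "z = -a") auto

lemma D_bounds: "-1 \<le> D z \<and> D z \<le> 1"
proof -
  consider "z \<le> -a" | "-a < z \<and> z < a" | "a \<le> z" by linarith
  then show ?thesis
  proof cases
    case 2 then show ?thesis using D_strict[of z a] D_strict[of "-a" z] D_a D_ma by auto
  qed (use D_ge_a D_le_ma in auto)
qed

lemma D_mono: "x \<le> y \<Longrightarrow> D x \<le> D y"
proof -
  assume xy: "x \<le> y"
  consider "y \<le> -a" | "a \<le> x" | "x \<le> -a" | "a \<le> y" | "-a \<le> x \<and> y \<le> a" by linarith
  then show ?thesis
  proof cases
    case 5 then show ?thesis using D_strict[of x y] xy by (cases "x = y") auto
  qed (use D_ge_a D_le_ma D_bounds xy in \<open>auto simp: less_eq_real_def\<close>)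
qed

lemma D_le1: "D x \<le> 1"
  using D_mono[of x a] D_mono[of a x] D_a D_gt by (cases "x \<le> a") auto

abbreviation "xp \<equiv> xplus a \<alpha> f"
abbreviation "F \<equiv> Falpha \<alpha> f"

lemma deriv_eq: "deriv f x = D x" by (rule DERIV_imp_deriv[OF Dder])

lemma D_cont_on: "continuous_on S D"
  using Dcont continuous_on_subset by blast

lemma xp_props: "xp \<in> {-a..a}" "D xp = \<alpha>"
proof -
  have "\<exists>x. -a \<le> x \<and> x \<le> a \<and> D x = \<alpha>"
    by (rule IVT') (use D_a D_ma al0 al1 apos D_cont_on in auto)
  then obtain x0 where x0: "x0 \<in> {-a..a}" "D x0 = \<alpha>" by auto
  have uq: "x = x0" if "x \<in> {-a..a}" "D x = \<alpha>" for x
    using D_strict[of x x0] D_strict[of x0 x] that x0 by (cases x x0 rule: linorder_cases) auto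
  have "\<exists>!x. x \<in> {-a..a} \<and> deriv f x = \<alpha>"
    using x0 uq unfolding deriv_eq by blast
  then have "xp \<in> {-a..a} \<and> deriv f xp = \<alpha>"
    unfolding xplus_def by (rule theI')
  then show "xp \<in> {-a..a}" "D xp = \<alpha>" by (auto simp: deriv_eq)
qed

lemma xp_lt: "xp < a" "-a < xp"
  using xp_props D_a D_ma al0 al1 by (auto simp: less_eq_real_def)

lemma D_below: "x < xp \<Longrightarrow> D x < \<alpha>"
  using D_strict[of x xp] xp_props D_le_ma[of x] al0 by (cases "x \<ge> -a") auto

lemma D_above: "x > xp \<Longrightarrow> D x > \<alpha>"
  using D_strict[of xp x] xp_props D_ge_a[of x] al1 by (cases "x \<le> a") auto

lemma Fder: "(F has_real_derivative (D x - \<alpha>)) (at x)"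
  unfolding Falpha_def[abs_def] by (auto intro!: derivative_eq_intros Dder)

lemma F_cont: "continuous_on S F"
  using Fder by (meson DERIV_isCont continuous_at_imp_continuous_on)

lemma F_dec: "x < y \<Longrightarrow> y \<le> xp \<Longrightarrow> F y < F x"
proof -
  assume xy: "x < y" "y \<le> xp"
  obtain z where z: "x < z" "z < y" "F y - F x = (y - x) * (D z - \<alpha>)"
    using MVT2[OF xy(1), of F "\<lambda>z. D z - \<alpha>"] Fder by blast
  have "D z - \<alpha> < 0" using D_below[of z] z xy by auto
  then have "(y - x) * (D z - \<alpha>) < 0" using xy by (simp add: mult_pos_neg)
  then show ?thesis using z by simp
qed

lemma F_inc: "xp \<le> x \<Longrightarrow> x < y \<Longrightarrow> F x < F y"
proof -
  assume xy: "xp \<le> x" "x < y"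
  obtain z where z: "x < z" "z < y" "F y - F x = (y - x) * (D z - \<alpha>)"
    using MVT2[OF xy(2), of F "\<lambda>z. D z - \<alpha>"] Fder by blast
  have "D z - \<alpha> > 0" using D_above[of z] z xy by auto
  then have "(y - x) * (D z - \<alpha>) > 0" using xy by simp
  then show ?thesis using z by simp
qed

lemma F_lip: "p \<le> q \<Longrightarrow> F q - F p \<le> (1 - \<alpha>) * (q - p)"
proof (cases "p = q")
  case False
  assume "p \<le> q"
  then have pq: "p < q" using False by simp
  obtain z where z: "p < z" "z < q" "F q - F p = (q - p) * (D z - \<alpha>)"
    using MVT2[OF pq, of F "\<lambda>z. D z - \<alpha>"] Fder by blast
  have "D z - \<alpha> \<le> 1 - \<alpha>" using D_bounds[of z] by simp
  then show ?thesis using z pq by (simp add: mult_left_mono mult.commute)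
qed simp

lemma F_cvx: "convex_on UNIV F"
  by (rule convex_on_realI[where f' = "\<lambda>x. D x - \<alpha>"]) (use Fder D_mono in auto)

lemma F_right: "s \<ge> a \<Longrightarrow> F s = (1 - \<alpha>) * s"
  using fout[of s] apos by (simp add: Falpha_def algebra_simps)

lemma F_left: "s \<le> -a \<Longrightarrow> F s = - (1 + \<alpha>) * s"
  using fout[of s] apos by (simp add: Falpha_def algebra_simps)

lemma F_min: "F xp \<le> F x"
  using F_dec[of x xp] F_inc[of xp x] by (cases x xp rule: linorder_cases) auto

lemma F_inj: "inj_on F {xp..}"
proof (rule inj_onI)
  fix x y assume "x \<in> {xp..}" "y \<in> {xp..}" "F x = F y"
  then show "x = y" using F_inc[of x y] F_inc[of y x] by (cases x y rule: linorder_cases) auto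
qed

lemma F_inj_left: "inj_on F {..xp}"
proof (rule inj_onI)
  fix x y assume "x \<in> {..xp}" "y \<in> {..xp}" "F x = F y"
  then show "x = y" using F_dec[of x y] F_dec[of y x] by (cases x y rule: linorder_cases) auto
qed

lemma phi_ex: "F xp \<le> v \<Longrightarrow> \<exists>u. xp \<le> u \<and> u \<le> max a (v / (1 - \<alpha>)) \<and> F u = v"
proof -
  assume v: "F xp \<le> v"
  define b where "b = max a (v / (1 - \<alpha>))"
  have b: "b \<ge> a" "b \<ge> v / (1 - \<alpha>)" unfolding b_def by auto
  have "F b = (1 - \<alpha>) * b" using F_right b by simp
  also have "\<dots> \<ge> v" using b(2) al1 by (simp add: field_simps)
  finally have Fb: "v \<le> F b" .
  show ?thesis unfolding b_def[symmetric]
    by (rule IVT') (use v Fb b xp_lt F_cont in auto)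
qed

lemma phi_eq: "x \<le> xp \<Longrightarrow> u \<ge> xp \<Longrightarrow> F u = F x \<Longrightarrow> phi a \<alpha> f x = u"
  unfolding phi_def by (rule the_inv_into_f_eq[OF F_inj]) auto

lemma phi_props: "x \<le> xp \<Longrightarrow> phi a \<alpha> f x \<ge> xp \<and> F (phi a \<alpha> f x) = F x
   \<and> phi a \<alpha> f x \<le> max a (F x / (1 - \<alpha>))"
  using phi_ex[of "F x"] F_min[of x] phi_eq by metis

abbreviation "g \<equiv> \<lambda>x. x + delta a \<alpha> f x"

lemma g_eq: "g x = x + F x / (1 - \<alpha>) - phi a \<alpha> f x"
  by (simp add: delta_def)

lemma g_mono: "t1 < t2 \<Longrightarrow> t2 \<le> xp \<Longrightarrow> g t1 < g t2"
proof -
  assume t: "t1 < t2" "t2 \<le> xp"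
  define u1 where "u1 = phi a \<alpha> f t1"
  define u2 where "u2 = phi a \<alpha> f t2"
  have p1: "u1 \<ge> xp" "F u1 = F t1" using phi_props[of t1] t unfolding u1_def by auto
  have p2: "u2 \<ge> xp" "F u2 = F t2" using phi_props[of t2] t unfolding u2_def by auto
  have Fl: "F t2 < F t1" using F_dec t by auto
  have "u2 \<le> u1"
  proof (rule ccontr)
    assume "\<not> u2 \<le> u1"
    then have "F u1 < F u2" using F_inc[of u1 u2] p1 by auto
    then show False using Fl p1 p2 by simp
  qed
  then have "F u1 - F u2 \<le> (1 - \<alpha>) * (u1 - u2)" by (rule F_lip)
  then have "(F t1 - F t2) / (1 - \<alpha>) \<le> u1 - u2" using p1 p2 al1 by (simp add: field_simps)
  then have "F t1 / (1 - \<alpha>) - u1 \<le> F t2 / (1 - \<alpha>) - u2" by (simp add: diff_divide_distrib)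
  then show ?thesis unfolding g_eq u1_def[symmetric] u2_def[symmetric] using t by linarith
qed

lemma g_inj: "inj_on g {..xp}"
proof (rule inj_onI)
  fix x y assume "x \<in> {..xp}" "y \<in> {..xp}" "g x = g y"
  then show "x = y" using g_mono[of x y] g_mono[of y x] by (cases x y rule: linorder_cases) auto
qed

lemma g_left: "t \<le> -a \<Longrightarrow> g t = t"
proof -
  assume t: "t \<le> -a"
  define u where "u = F t / (1 - \<alpha>)"
  have Ft: "F t = - (1 + \<alpha>) * t" using F_left t by simp
  have "(1 - \<alpha>) * a \<le> (1 + \<alpha>) * a" using al0 apos by simp
  also have "\<dots> \<le> (1 + \<alpha>) * (- t)" by (rule mult_left_mono) (use t al0 in auto)
  also have "\<dots> = F t" using Ft by (simp add: algebra_simps)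
  finally have "a \<le> u" unfolding u_def using al1 by (simp add: field_simps)
  then have "F u = (1 - \<alpha>) * u" using F_right by simp
  then have Fu: "F u = F t" unfolding u_def using al1 by simp
  have "phi a \<alpha> f t = u" by (rule phi_eq) (use t xp_lt \<open>a \<le> u\<close> Fu in auto)
  then show ?thesis unfolding g_eq u_def by simp
qed

lemma phi_cont: "c \<le> xp \<Longrightarrow> continuous_on {c..xp} (phi a \<alpha> f)"
proof -
  assume c: "c \<le> xp"
  define b where "b = max a (F c / (1 - \<alpha>))"
  have inj: "inj_on F {xp..b}" using F_inj by (rule inj_on_subset) auto
  have ci: "continuous_on (F ` {xp..b}) (the_inv_into {xp..b} F)"
    by (rule continuous_on_inv_into[OF F_cont _ inj]) simp
  have loc: "phi a \<alpha> f x \<in> {xp..b} \<and> F (phi a \<alpha> f x) = F x" if x: "x \<in> {c..xp}" for x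
  proof -
    have "F x \<le> F c" using F_dec[of c x] x by (cases "c = x") auto
    then have "F x / (1 - \<alpha>) \<le> F c / (1 - \<alpha>)" using al1 by (simp add: divide_right_mono)
    then have "max a (F x / (1 - \<alpha>)) \<le> b" unfolding b_def by auto
    then show ?thesis using phi_props[of x] x by auto
  qed
  have eq: "the_inv_into {xp..b} F (F x) = phi a \<alpha> f x" if x: "x \<in> {c..xp}" for x
    by (rule the_inv_into_f_eq[OF inj]) (use loc[OF x] in auto)
  have "continuous_on {c..xp} (\<lambda>x. the_inv_into {xp..b} F (F x))"
  proof (rule continuous_on_compose2[OF ci F_cont])
    show "F ` {c..xp} \<subseteq> F ` {xp..b}"
    proof
      fix w assume "w \<in> F ` {c..xp}"
      then obtain x where x: "x \<in> {c..xp}" "w = F x" by auto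
      then show "w \<in> F ` {xp..b}" using loc[OF x(1)] by (metis image_eqI)
    qed
  qed
  then show ?thesis by (rule continuous_on_eq) (use eq in auto)
qed

lemma g_cont: "c \<le> xp \<Longrightarrow> continuous_on {c..xp} g"
proof -
  assume c: "c \<le> xp"
  have "continuous_on {c..xp} (\<lambda>x. x + F x / (1 - \<alpha>) - phi a \<alpha> f x)"
    by (intro continuous_intros F_cont phi_cont c) (use al1 in auto)
  then show ?thesis by (simp add: g_eq)
qed

abbreviation "sa \<equiv> salpha a \<alpha> f"

lemma g_xp: "g xp = sa" by (simp add: salpha_def)

lemma tau_props: "y \<le> sa \<Longrightarrow> tau a \<alpha> f y \<le> xp \<and> g (tau a \<alpha> f y) = y"
proof -
  assume y: "y \<le> sa"
  define c where "c = min y (-a)"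
  have c: "c \<le> xp" "c \<le> -a" using xp_lt unfolding c_def by auto
  have "g c = c" using g_left c by simp
  then have "\<exists>x. c \<le> x \<and> x \<le> xp \<and> g x = y"
    by (intro IVT'[where f = g]) (use c y g_xp g_cont[OF c(1)] in \<open>auto simp: c_def\<close>)
  then obtain x where x: "x \<le> xp" "g x = y" by auto
  have "tau a \<alpha> f y = x" unfolding tau_def by (rule the_inv_into_f_eq[OF g_inj]) (use x in auto)
  then show ?thesis using x by simp
qed

lemma phi_xp: "phi a \<alpha> f xp = xp"
  by (rule phi_eq) auto

lemma sa_eq: "sa = F xp / (1 - \<alpha>)"
  using g_xp phi_xp by (simp add: g_eq)

lemma tau_sa: "tau a \<alpha> f sa = xp"
  unfolding tau_def by (rule the_inv_into_f_eq[OF g_inj]) (use g_xp in auto)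

definition G where "G y = Sh a \<alpha> f y - \<alpha> * y"

lemma G_left: "y \<le> sa \<Longrightarrow> G y = F (tau a \<alpha> f y)"
  by (simp add: G_def Sh_def)

lemma G_right: "y \<ge> sa \<Longrightarrow> G y = (1 - \<alpha>) * y"
proof (cases "y = sa")
  case True
  then show ?thesis using G_left[of y] tau_sa sa_eq al1 by simp
qed (auto simp: G_def Sh_def algebra_simps)

lemma G_min: "G sa \<le> G y"
proof (cases "y \<le> sa")
  case True
  then show ?thesis using G_left[of y] G_left[of sa] tau_sa F_min by simp
next
  case False
  then have "(1 - \<alpha>) * sa \<le> (1 - \<alpha>) * y" using al1 by (simp add: mult_left_mono)
  then show ?thesis using G_right[of y] G_right[of sa] False by simp
qed

lemma G_cvx_right: "convex_on {sa..} G"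
proof (rule convex_onI)
  fix t x y :: real assume "0 < t" "t < 1" "x \<in> {sa..}" "y \<in> {sa..}"
  moreover have "(1 - t) * x + t * y \<ge> sa"
  proof -
    have "(1 - t) * sa \<le> (1 - t) * x" "t * sa \<le> t * y"
      using calculation by (auto intro: mult_left_mono)
    then show ?thesis by (simp add: algebra_simps)
  qed
  ultimately have "G ((1 - t) * x + t * y) = (1 - \<alpha>) * ((1 - t) * x + t * y)"
    "G x = (1 - \<alpha>) * x" "G y = (1 - \<alpha>) * y" using G_right by auto
  moreover have "(1 - \<alpha>) * ((1 - t) * x + t * y) = (1 - t) * ((1 - \<alpha>) * x) + t * ((1 - \<alpha>) * y)"
    by (simp add: algebra_simps)
  ultimately show "G ((1 - t) *\<^sub>R x + t *\<^sub>R y) \<le> (1 - t) * G x + t * G y"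
    by simp
qed simp

lemma G_cvx_left: "convex_on {..sa} G"
proof (rule convex_onI)
  show "convex {..sa}" by simp
  fix lam y1 y2 :: real assume lm: "0 < lam" "lam < 1" and y: "y1 \<in> {..sa}" "y2 \<in> {..sa}"
  define y where "y = (1 - lam) * y1 + lam * y2"
  have ys: "y \<le> sa"
  proof -
    have "(1 - lam) * y1 \<le> (1 - lam) * sa" "lam * y2 \<le> lam * sa"
      using lm y by (auto intro: mult_left_mono)
    then show ?thesis unfolding y_def by (simp add: algebra_simps)
  qed
  define t1 where "t1 = tau a \<alpha> f y1"
  define t2 where "t2 = tau a \<alpha> f y2"
  define T where "T = tau a \<alpha> f y"
  have t1: "t1 \<le> xp" "g t1 = y1" using tau_props[of y1] y unfolding t1_def by auto
  have t2: "t2 \<le> xp" "g t2 = y2" using tau_props[of y2] y unfolding t2_def by auto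
  have T: "T \<le> xp" "g T = y" using tau_props[of y] ys unfolding T_def by auto
  define u1 where "u1 = phi a \<alpha> f t1"
  define u2 where "u2 = phi a \<alpha> f t2"
  have u1: "u1 \<ge> xp" "F u1 = F t1" using phi_props[of t1] t1 unfolding u1_def by auto
  have u2: "u2 \<ge> xp" "F u2 = F t2" using phi_props[of t2] t2 unfolding u2_def by auto
  define V where "V = (1 - lam) * F t1 + lam * F t2"
  have Vlo: "F xp \<le> V"
  proof -
    have "(1 - lam) * F xp \<le> (1 - lam) * F t1" "lam * F xp \<le> lam * F t2"
      using lm F_min by (auto intro: mult_left_mono)
    then show ?thesis unfolding V_def by (simp add: algebra_simps)
  qed
  define m where "m = min t1 t2"
  have m: "m \<le> xp" using t1 t2 unfolding m_def by auto
  have Fm: "F t1 \<le> F m" "F t2 \<le> F m"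
    using F_dec[of m t1] F_dec[of m t2] t1 t2 unfolding m_def by (auto simp: less_eq_real_def min_def)
  have Vhi: "V \<le> F m"
  proof -
    have "(1 - lam) * F t1 \<le> (1 - lam) * F m" "lam * F t2 \<le> lam * F m"
      using lm Fm by (auto intro: mult_left_mono)
    then show ?thesis unfolding V_def by (simp add: algebra_simps)
  qed
  obtain t' where t': "m \<le> t'" "t' \<le> xp" "F t' = V"
    using IVT2'[of F xp V m, OF Vlo Vhi m F_cont] by auto
  define u' where "u' = phi a \<alpha> f t'"
  have u': "u' \<ge> xp" "F u' = V" using phi_props[of t'] t' unfolding u'_def by auto
  define ts where "ts = (1 - lam) * t1 + lam * t2"
  define us where "us = (1 - lam) * u1 + lam * u2"
  have Fts: "F ts \<le> V" unfolding ts_def V_def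
    using convex_onD[OF F_cvx, of lam t1 t2] lm by simp
  have Fus: "F us \<le> V" unfolding us_def V_def
    using convex_onD[OF F_cvx, of lam u1 u2] lm u1 u2 by simp
  have tsx: "ts \<le> xp"
  proof -
    have "(1 - lam) * t1 \<le> (1 - lam) * xp" "lam * t2 \<le> lam * xp"
      using lm t1 t2 by (auto intro: mult_left_mono)
    then show ?thesis unfolding ts_def by (simp add: algebra_simps)
  qed
  have usx: "us \<ge> xp"
  proof -
    have "(1 - lam) * xp \<le> (1 - lam) * u1" "lam * xp \<le> lam * u2"
      using lm u1 u2 by (auto intro: mult_left_mono)
    then show ?thesis unfolding us_def by (simp add: algebra_simps)
  qed
  have "t' \<le> ts"
  proof (rule ccontr)
    assume "\<not> t' \<le> ts"
    then have "F t' < F ts" using F_dec[of ts t'] t' by auto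
    then show False using Fts t' by simp
  qed
  have "us \<le> u'"
  proof (rule ccontr)
    assume "\<not> us \<le> u'"
    then have "F u' < F us" using F_inc[of u' us] u' by auto
    then show False using Fus u' by simp
  qed
  have gt': "g t' = t' + V / (1 - \<alpha>) - u'" using u' t' by (simp add: g_eq u'_def)
  have lin: "y = ts + V / (1 - \<alpha>) - us"
  proof -
    have "y = (1 - lam) * (t1 + F t1 / (1 - \<alpha>) - u1) + lam * (t2 + F t2 / (1 - \<alpha>) - u2)"
      unfolding y_def using t1 t2 by (simp add: g_eq u1_def u2_def)
    also have "\<dots> = ts + ((1 - lam) * (F t1 / (1 - \<alpha>)) + lam * (F t2 / (1 - \<alpha>))) - us"
      unfolding ts_def us_def by (simp add: algebra_simps)
    also have "(1 - lam) * (F t1 / (1 - \<alpha>)) + lam * (F t2 / (1 - \<alpha>)) = V / (1 - \<alpha>)"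
      unfolding V_def by (simp add: add_divide_distrib)
    finally show ?thesis .
  qed
  have "g t' \<le> g T" using gt' lin T \<open>t' \<le> ts\<close> \<open>us \<le> u'\<close> by linarith
  then have "t' \<le> T" using g_mono[of T t'] T t' by (cases "t' \<le> T") auto
  then have "F T \<le> F t'" using F_dec[of t' T] T by (cases "t' = T") auto
  then have "G y \<le> V" using G_left[OF ys] t' unfolding T_def by simp
  then show "G ((1 - lam) *\<^sub>R y1 + lam *\<^sub>R y2) \<le> (1 - lam) * G y1 + lam * G y2"
    using G_left[of y1] G_left[of y2] y unfolding y_def V_def t1_def t2_def by simp
qed

lemma Sh_cvx: "convex_on UNIV (Sh a \<alpha> f)"
proof -
  have "convex_on UNIV G" by (rule glue_convex[OF G_cvx_left G_cvx_right G_min])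
  moreover have "convex_on UNIV (\<lambda>y. \<alpha> * y)"
    using convex_on_cmul[of \<alpha> UNIV "\<lambda>y. y"] al0 by (simp add: convex_on_ident)
  ultimately have "convex_on UNIV (\<lambda>y. G y + \<alpha> * y)" by (rule convex_on_add)
  moreover have "(\<lambda>y. G y + \<alpha> * y) = Sh a \<alpha> f" by (auto simp: G_def)
  ultimately show ?thesis by simp
qed

end

theorem corollary4p14:
  fixes a \<alpha> :: real and f :: "real \<Rightarrow> real"
  assumes "a > 0" and "0 \<le> \<alpha>" and "\<alpha> < 1" and "f \<in> classC a"
  shows "convex_on UNIV (Sh a \<alpha> f)"
proof -
  from assms(4) have C1: "f C1_differentiable_on UNIV"
    and out: "\<And>s. a \<le> \<bar>s\<bar> \<Longrightarrow> f s = \<bar>s\<bar>" and sc: "strictly_convex_on {-a..a} f"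
    unfolding classC_def by auto
  from C1 obtain D where D: "\<And>x. (f has_vector_derivative D x) (at x)" "continuous_on UNIV D"
    unfolding C1_differentiable_on_def by auto
  interpret shc a \<alpha> f D
    by unfold_locales (use assms D out sc in \<open>auto simp: has_real_derivative_iff_has_vector_derivative\<close>)
  show ?thesis by (rule Sh_cvx)
qed

end
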